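(* Let $(\Omega,\mathcal F)$ be a measurable space with $\Sigma\neq\emptyset$, $\nu$ a finite measure on it, and $\mu$ a finite measure with $\mu\ll\nu$. Let $F_\mu(y)=\nu(\{\omega:\frac{d\mu}{d\nu}(\omega)\le y\})$ ($y\ge0$), $v_\mu(A)=\int_0^\infty\min(\nu(\Omega)-F_\mu(z),\nu(A))\,dz$, $I_{\mu,y}=\{\omega:\frac{d\mu}{d\nu}(\omega)>y\}$, and $\mathcal I_\mu=\{\emptyset,\Omega\}\cup\{I_{\mu,y}\mid y\ge0\}$. Assume $\mathcal I_\mu\in\Sigma$ and that the image of $F_\mu$ contains the image of $\nu$ (i.e. $\{\nu(A):A\in\mathcal F\}\subset\{F_\mu(y):y\ge0\}$). Then for every non-negative measurable $f:\Omega\to[0,\infty)$ that is comonotone with $\frac{d\mu}{d\nu}$, $$v_\mu(f)=\int_\Omega f\,d\mu=\sup\Big\{\int_\Omega f\,d\mu'\ \Big|\ \mu'\text{ a finite measure},\ \mu'\ll\nu,\ F_{\mu'}=F_\mu\Big\},$$ where $v_\mu(f)=\int_0^\infty v_\mu(\{\omega:f(\omega)>z\})\,dz$.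
   Context: $\Sigma$ denotes the set of all classes $\mathcal I\subset\mathcal F$ that are chains (totally ordered by inclusion), contain $\emptyset$ and $\Omega$, and generate $\mathcal F$ as a $\sigma$-algebra. $\frac{d\mu}{d\nu}$ is the non-negative Radon–Nikodym derivative; $F_{\mu'}$ is defined from $\mu'$ like $F_\mu$. Two functions $f,g:\Omega\to\mathbb R$ are comonotone if the family $\{\{f\le z\}: z\in\mathbb R\}\cup\{\{g\le z\}:z\in\mathbb R\}$ is a chain under inclusion. *)

theory Defs
  imports "HOL-Probability.Probability"
begin

definition chain_classes :: "'a measure \<Rightarrow> 'a set set set" where
  "chain_classes M = {I. I \<subseteq> sets M \<and> (\<forall>A\<in>I. \<forall>B\<in>I. A \<subseteq> B \<or> B \<subseteq> A)
      \<and> {} \<in> I \<and> space M \<in> I \<and> sigma_sets (space M) I = sets M}"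

definition comonotone_on :: "'a set \<Rightarrow> ('a \<Rightarrow> real) \<Rightarrow> ('a \<Rightarrow> real) \<Rightarrow> bool" where
  "comonotone_on S f g =
     (let C = {{x\<in>S. f x \<le> z} | z. True} \<union> {{x\<in>S. g x \<le> z} | z. True}
      in \<forall>A\<in>C. \<forall>B\<in>C. A \<subseteq> B \<or> B \<subseteq> A)"

text \<open>F_mu(y) = nu({dmu/dnu <= y}) where h is (a version of) dmu/dnu.\<close>
definition distF :: "'a measure \<Rightarrow> ('a \<Rightarrow> ennreal) \<Rightarrow> real \<Rightarrow> real" where
  "distF M h y = measure M {x\<in>space M. h x \<le> ennreal y}"

definition vset :: "'a measure \<Rightarrow> ('a \<Rightarrow> ennreal) \<Rightarrow> 'a set \<Rightarrow> ennreal" where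
  "vset M h A = (\<integral>\<^sup>+ z\<in>{0..}. ennreal (min (measure M (space M) - distF M h z) (measure M A)) \<partial>lborel)"

definition vfun :: "'a measure \<Rightarrow> ('a \<Rightarrow> ennreal) \<Rightarrow> ('a \<Rightarrow> real) \<Rightarrow> ennreal" where
  "vfun M h f = (\<integral>\<^sup>+ z\<in>{0..}. vset M h {x\<in>space M. f x > z} \<partial>lborel)"

end

theory Submission imports Defs begin

lemma emeasure_lborel_lt_ennreal:
  "emeasure lborel {t::real. 0 \<le> t \<and> ennreal t < e} = e"
proof (cases e)
  case (real r)
  then have "{t::real. 0 \<le> t \<and> ennreal t < e} = {0..<r}"
    by (auto simp: ennreal_less_iff)
  then show ?thesis using real by simp
next
  case top
  then have "{t::real. 0 \<le> t \<and> ennreal t < e} = {0..}" by auto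
  moreover have "emeasure lborel {0::real..} = top"
  proof (rule ccontr)
    assume "emeasure lborel {0::real..} \<noteq> top"
    then obtain r where r: "emeasure lborel {0::real..} = ennreal r" "0 \<le> r"
      by (cases "emeasure lborel {0::real..}") auto
    have "emeasure lborel {0::real..r+1} \<le> emeasure lborel {0::real..}"
      by (rule emeasure_mono) auto
    then show False using r by (simp add: ennreal_le_iff)
  qed
  ultimately show ?thesis using top by simp
qed

lemma layer_cake:
  assumes sf: "sigma_finite_measure M" and h[measurable]: "h \<in> borel_measurable M"
  shows "(\<integral>\<^sup>+x. h x \<partial>M) = (\<integral>\<^sup>+t\<in>{0..}. emeasure M {x\<in>space M. ennreal t < h x} \<partial>lborel)"
proof -
  interpret pair_sigma_finite M lborel
    by (simp add: pair_sigma_finite.intro sf lborel.sigma_finite_measure_axioms)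
  have "(\<integral>\<^sup>+x. h x \<partial>M) = (\<integral>\<^sup>+x. (\<integral>\<^sup>+t. indicator {t::real. 0 \<le> t \<and> ennreal t < h x} t \<partial>lborel) \<partial>M)"
    by (simp add: emeasure_lborel_lt_ennreal)
  also have "\<dots> = (\<integral>\<^sup>+t. (\<integral>\<^sup>+x. indicator {t::real. 0 \<le> t \<and> ennreal t < h x} t \<partial>M) \<partial>lborel)"
    by (rule Fubini'[symmetric]) (simp add: indicator_def)
  also have "\<dots> = (\<integral>\<^sup>+t. emeasure M {x\<in>space M. ennreal t < h x} * indicator {0..} t \<partial>lborel)"
  proof (rule nn_integral_cong)
    fix t :: real
    have "(\<integral>\<^sup>+x. indicator {t::real. 0 \<le> t \<and> ennreal t < h x} t \<partial>M)
        = (\<integral>\<^sup>+x. indicator {0..} t * indicator {x\<in>space M. ennreal t < h x} x \<partial>M)"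
      by (rule nn_integral_cong) (auto simp: indicator_def)
    also have "\<dots> = indicator {0..} t * emeasure M {x\<in>space M. ennreal t < h x}"
      by (rule nn_integral_cmult_indicator) measurable
    finally show "(\<integral>\<^sup>+x. indicator {t::real. 0 \<le> t \<and> ennreal t < h x} t \<partial>M) = emeasure M {x\<in>space M. ennreal t < h x} * indicator {0..} t"
      by (simp add: mult.commute)
  qed
  finally show ?thesis .
qed

lemma set_nn_cong0:
  "(\<And>z::real. z \<ge> 0 \<Longrightarrow> F z = G z) \<Longrightarrow> (\<integral>\<^sup>+z\<in>{0..}. F z \<partial>lborel) = (\<integral>\<^sup>+z\<in>{0..}. G z \<partial>lborel)"
  by (intro nn_integral_cong) (auto simp: indicator_def)

lemma set_nn_mono0:
  "(\<And>z::real. z \<ge> 0 \<Longrightarrow> F z \<le> G z) \<Longrightarrow> (\<integral>\<^sup>+z\<in>{0..}. F z \<partial>lborel) \<le> (\<integral>\<^sup>+z\<in>{0..}. G z \<partial>lborel)"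
  by (intro nn_integral_mono) (auto simp: indicator_def)

lemma density_layer:
  assumes sf: "sigma_finite_measure M" and h[measurable]: "h \<in> borel_measurable M"
    and A[measurable]: "A \<in> sets M"
  shows "emeasure (density M h) A = (\<integral>\<^sup>+t\<in>{0..}. emeasure M (A \<inter> {x\<in>space M. ennreal t < h x}) \<partial>lborel)"
proof -
  have "emeasure (density M h) A = (\<integral>\<^sup>+ x. h x * indicator A x \<partial>M)"
    by (rule emeasure_density) auto
  also have "\<dots> = (\<integral>\<^sup>+t\<in>{0..}. emeasure M {x\<in>space M. ennreal t < h x * indicator A x} \<partial>lborel)"
    by (rule layer_cake[OF sf]) measurable
  also have "\<dots> = (\<integral>\<^sup>+t\<in>{0..}. emeasure M (A \<inter> {x\<in>space M. ennreal t < h x}) \<partial>lborel)"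
  proof (rule set_nn_cong0)
    fix t :: real
    have "{x\<in>space M. ennreal t < h x * indicator A x} = A \<inter> {x\<in>space M. ennreal t < h x}"
      using sets.sets_into_space[OF A] by (auto simp: indicator_def)
    then show "emeasure M {x\<in>space M. ennreal t < h x * indicator A x} = emeasure M (A \<inter> {x\<in>space M. ennreal t < h x})"
      by simp
  qed
  finally show ?thesis .
qed

theorem theorem14:
  fixes M :: "'a measure" and \<mu> :: "'a measure" and g :: "'a \<Rightarrow> real" and f :: "'a \<Rightarrow> real"
  assumes nu_fin: "finite_measure M"
    and Sigma_ne: "chain_classes M \<noteq> {}"
    and mu_fin: "finite_measure \<mu>" and mu_sets: "sets \<mu> = sets M"
    and mu_ac: "absolutely_continuous M \<mu>"
    and g_meas: "g \<in> borel_measurable M" and g_nonneg: "\<forall>x\<in>space M. g x \<ge> 0"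
    and g_RN: "\<mu> = density M (\<lambda>x. ennreal (g x))"
    and I_mu: "{{}, space M} \<union> {{x\<in>space M. g x > y} | y. y \<ge> 0} \<in> chain_classes M"
    and image: "{measure M A | A. A \<in> sets M} \<subseteq> {distF M (\<lambda>x. ennreal (g x)) y | y. y \<ge> 0}"
    and f_meas: "f \<in> borel_measurable M" and f_nonneg: "\<forall>x\<in>space M. f x \<ge> 0"
    and f_com: "comonotone_on (space M) f g"
  shows "vfun M (\<lambda>x. ennreal (g x)) f = (\<integral>\<^sup>+ x. ennreal (f x) \<partial>\<mu>)
       \<and> (\<integral>\<^sup>+ x. ennreal (f x) \<partial>\<mu>) =
         (SUP \<mu>' \<in> {\<mu>'. finite_measure \<mu>' \<and> sets \<mu>' = sets M \<and> absolutely_continuous M \<mu>'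
                    \<and> (\<forall>y\<ge>0. distF M (RN_deriv M \<mu>') y = distF M (\<lambda>x. ennreal (g x)) y)}.
            \<integral>\<^sup>+ x. ennreal (f x) \<partial>\<mu>')"
proof -
  interpret finite_measure M by (rule nu_fin)
  note [measurable] = g_meas f_meas
  define G where "G = (\<lambda>x. ennreal (g x))"
  define A where "A = (\<lambda>z. {x\<in>space M. f x > z})"
  define B where "B = (\<lambda>t. {x\<in>space M. g x > t})"
  have A_sets[measurable]: "A z \<in> sets M" for z unfolding A_def by measurable
  have B_sets[measurable]: "B t \<in> sets M" for t unfolding B_def by measurable
  have sfM: "sigma_finite_measure M" by unfold_locales
  have nest: "A z \<subseteq> B t \<or> B t \<subseteq> A z" for z t
  proof -
    have "{x\<in>space M. f x \<le> z} \<subseteq> {x\<in>space M. g x \<le> t} \<or> {x\<in>space M. g x \<le> t} \<subseteq> {x\<in>space M. f x \<le> z}"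
    proof -
      let ?C = "{{x\<in>space M. f x \<le> z} | z. True} \<union> {{x\<in>space M. g x \<le> z} | z. True}"
      have H: "\<forall>X\<in>?C. \<forall>Y\<in>?C. X \<subseteq> Y \<or> Y \<subseteq> X"
        using f_com unfolding comonotone_on_def Let_def by simp
      have X: "{x\<in>space M. f x \<le> z} \<in> ?C" by blast
      have Y: "{x\<in>space M. g x \<le> t} \<in> ?C" by blast
      show ?thesis using bspec[OF bspec[OF H X] Y] .
    qed
    then show ?thesis unfolding A_def B_def by (auto simp: not_less[symmetric])
  qed
  have compl: "measure M (space M) - distF M h t = measure M {x\<in>space M. ennreal t < h x}"
    if [measurable]: "h \<in> borel_measurable M" for h and t :: real
  proof -
    have "{x\<in>space M. ennreal t < h x} = space M - {x\<in>space M. h x \<le> ennreal t}"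
      by auto
    then show ?thesis unfolding distF_def
      by (simp add: finite_measure_Diff)
  qed
  have GB: "{x\<in>space M. ennreal t < G x} = B t" if "t \<ge> 0" for t
    using that g_nonneg unfolding G_def B_def by (auto simp: ennreal_less_iff)
  have key: "emeasure M (A z \<inter> B t) = ennreal (min (measure M (space M) - distF M G t) (measure M (A z)))"
    if "t \<ge> 0" for z t
  proof -
    have "measure M (space M) - distF M G t = measure M (B t)"
      using compl[of G t] GB[OF that] unfolding G_def by simp
    moreover have "measure M (A z \<inter> B t) = min (measure M (B t)) (measure M (A z))"
    proof (cases "A z \<subseteq> B t")
      case True
      then have "measure M (A z) \<le> measure M (B t)" by (intro finite_measure_mono) auto
      then show ?thesis using True by (simp add: Int_absorb2 min_def)
    next
      case False
      then have BA: "B t \<subseteq> A z" using nest[of z t] by blast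
      then have "measure M (B t) \<le> measure M (A z)" by (intro finite_measure_mono) auto
      then show ?thesis using BA by (simp add: Int_absorb1 min_def)
    qed
    ultimately show ?thesis by (simp add: emeasure_eq_measure)
  qed
  have muA: "emeasure \<mu> (A z) = vset M G (A z)" for z
  proof -
    have "emeasure \<mu> (A z) = (\<integral>\<^sup>+t\<in>{0..}. emeasure M (A z \<inter> {x\<in>space M. ennreal t < G x}) \<partial>lborel)"
      unfolding g_RN G_def by (rule density_layer[OF sfM]) measurable
    also have "\<dots> = vset M G (A z)"
      unfolding vset_def by (rule set_nn_cong0) (simp add: GB key)
    finally show ?thesis .
  qed
  have sf_mu: "sigma_finite_measure \<mu>" using mu_fin finite_measure.axioms(1) by blast
  have layer_f: "(\<integral>\<^sup>+ x. ennreal (f x) \<partial>N) = (\<integral>\<^sup>+z\<in>{0..}. emeasure N (A z) \<partial>lborel)"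
    if "sigma_finite_measure N" "sets N = sets M" for N
  proof -
    have sp: "space N = space M" using that(2) by (rule sets_eq_imp_space_eq)
    have mN: "f \<in> borel_measurable N" using that(2) by (simp cong: measurable_cong_sets)
    have "(\<integral>\<^sup>+ x. ennreal (f x) \<partial>N) = (\<integral>\<^sup>+z\<in>{0..}. emeasure N {x\<in>space N. ennreal z < ennreal (f x)} \<partial>lborel)"
      by (rule layer_cake[OF that(1)]) (use mN in measurable)
    also have "\<dots> = (\<integral>\<^sup>+z\<in>{0..}. emeasure N (A z) \<partial>lborel)"
      by (rule set_nn_cong0) (simp add: sp A_def ennreal_less_iff)
    finally show ?thesis .
  qed
  have part1: "vfun M G f = (\<integral>\<^sup>+ x. ennreal (f x) \<partial>\<mu>)"
    unfolding layer_f[OF sf_mu mu_sets] vfun_def by (simp add: muA[unfolded A_def] A_def)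
  have upper: "(\<integral>\<^sup>+ x. ennreal (f x) \<partial>N) \<le> (\<integral>\<^sup>+ x. ennreal (f x) \<partial>\<mu>)"
    if N: "finite_measure N" "sets N = sets M" "absolutely_continuous M N"
      "\<forall>y\<ge>0. distF M (RN_deriv M N) y = distF M G y" for N
  proof -
    define h where "h = RN_deriv M N"
    have h_meas[measurable]: "h \<in> borel_measurable M" unfolding h_def by simp
    have Nd: "density M h = N" unfolding h_def using N by (simp add: density_RN_deriv)
    have sfN: "sigma_finite_measure N" using N(1) finite_measure.axioms(1) by blast
    have "(\<integral>\<^sup>+ x. ennreal (f x) \<partial>N) = (\<integral>\<^sup>+z\<in>{0..}. emeasure N (A z) \<partial>lborel)"
      by (rule layer_f[OF sfN N(2)])
    also have "\<dots> \<le> (\<integral>\<^sup>+z\<in>{0..}. vset M G (A z) \<partial>lborel)"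
    proof (rule set_nn_mono0)
      fix z :: real
      have "emeasure N (A z) = (\<integral>\<^sup>+t\<in>{0..}. emeasure M (A z \<inter> {x\<in>space M. ennreal t < h x}) \<partial>lborel)"
        unfolding Nd[symmetric] by (rule density_layer[OF sfM]) measurable
      also have "\<dots> \<le> vset M G (A z)"
        unfolding vset_def
      proof (rule set_nn_mono0)
        fix t :: real assume t: "t \<ge> 0"
        have "measure M (A z \<inter> {x\<in>space M. ennreal t < h x}) \<le> measure M {x\<in>space M. ennreal t < h x}"
          by (rule finite_measure_mono) auto
        also have "\<dots> = measure M (space M) - distF M G t"
          using compl[OF h_meas, of t] N(4) t unfolding h_def by simp
        finally have 1: "measure M (A z \<inter> {x\<in>space M. ennreal t < h x}) \<le> measure M (space M) - distF M G t" .
        have 2: "measure M (A z \<inter> {x\<in>space M. ennreal t < h x}) \<le> measure M (A z)"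
          by (rule finite_measure_mono) auto
        show "emeasure M (A z \<inter> {x\<in>space M. ennreal t < h x}) \<le> ennreal (min (measure M (space M) - distF M G t) (measure M (A z)))"
          using 1 2 by (simp add: emeasure_eq_measure ennreal_leI)
      qed
      finally show "emeasure N (A z) \<le> vset M G (A z)" .
    qed
    also have "\<dots> = (\<integral>\<^sup>+ x. ennreal (f x) \<partial>\<mu>)"
      using part1 unfolding vfun_def A_def by simp
    finally show ?thesis .
  qed
  have mu_in: "finite_measure \<mu> \<and> sets \<mu> = sets M \<and> absolutely_continuous M \<mu>
                    \<and> (\<forall>y\<ge>0. distF M (RN_deriv M \<mu>) y = distF M G y)"
  proof (intro conjI allI impI mu_fin mu_sets mu_ac)
    fix y :: real
    have ae: "AE x in M. G x = RN_deriv M \<mu> x"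
      by (rule RN_deriv_unique) (auto simp: G_def g_RN)
    show "distF M (RN_deriv M \<mu>) y = distF M G y"
      unfolding distF_def
    proof (rule measure_eq_AE)
      show "AE x in M. (x \<in> {x \<in> space M. RN_deriv M \<mu> x \<le> ennreal y}) = (x \<in> {x \<in> space M. G x \<le> ennreal y})"
        using ae by auto
      show "{x \<in> space M. G x \<le> ennreal y} \<in> sets M" unfolding G_def by measurable
    qed measurable
  qed
  have part2: "(\<integral>\<^sup>+ x. ennreal (f x) \<partial>\<mu>) =
         (SUP \<mu>' \<in> {\<mu>'. finite_measure \<mu>' \<and> sets \<mu>' = sets M \<and> absolutely_continuous M \<mu>'
                    \<and> (\<forall>y\<ge>0. distF M (RN_deriv M \<mu>') y = distF M G y)}.
            \<integral>\<^sup>+ x. ennreal (f x) \<partial>\<mu>')"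
  proof (rule antisym)
    show "(\<integral>\<^sup>+ x. ennreal (f x) \<partial>\<mu>) \<le> (SUP \<mu>' \<in> {\<mu>'. finite_measure \<mu>' \<and> sets \<mu>' = sets M \<and> absolutely_continuous M \<mu>'
                    \<and> (\<forall>y\<ge>0. distF M (RN_deriv M \<mu>') y = distF M G y)}.
            \<integral>\<^sup>+ x. ennreal (f x) \<partial>\<mu>')"
      by (rule SUP_upper) (use mu_in in simp)
  qed (rule SUP_least, use upper in blast)
  show ?thesis using part1 part2 unfolding G_def by simp
qed

end
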